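(* Let $G$ be a simple graph of order $n$ with adjacency eigenvalues $\lambda_1,\lambda_2,\dots,\lambda_n$ (listed with multiplicity), and let $G^l$ be the graph obtained from $G$ by adding a loop on each vertex of $G$. Let $(G\cup G^l)_n$ denote the disjoint union of $G$ and $G^l$, a graph of order $2n$ with exactly $n$ self-loops. If $|\lambda_i|\ge \frac12$ for each $i=1,2,\dots,n$, then $E\big((G\cup G^l)_n\big)=2E(G)$.
   Context: For a simple graph $G$ with adjacency matrix $A(G)$ and eigenvalues $\lambda_1,\dots,\lambda_n$, the energy is $E(G)=\sum_{i=1}^n|\lambda_i|$. For a graph $G_\sigma$ of order $N$ obtained from a simple graph by attaching self-loops on $\sigma$ of its vertices, the adjacency matrix is $A(G_\sigma)=A(G)+I_\sigma$, where $I_\sigma$ is the $N\times N$ diagonal matrix with exactly $\sigma$ ones on the diagonal (at the looped vertices) and zeros elsewhere; if $\mu_1,\dots,\mu_N$ are the eigenvalues of $A(G_\sigma)$, its energy is $E(G_\sigma)=\sum_{i=1}^N\left|\mu_i-\frac{\sigma}{N}\right|$. The subscript in $(G\cup G^l)_n$ indicates the number of loops $\sigma=n$. *)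

theory Defs
  imports "Jordan_Normal_Form.Char_Poly" "HOL-Computational_Algebra.Polynomial"
begin

definition simple_graph :: "nat \<Rightarrow> (nat \<Rightarrow> nat \<Rightarrow> bool) \<Rightarrow> bool" where
  "simple_graph n E \<longleftrightarrow> (\<forall>i<n. \<forall>j<n. E i j = E j i) \<and> (\<forall>i<n. \<not> E i i)"

definition adj_mat :: "nat \<Rightarrow> (nat \<Rightarrow> nat \<Rightarrow> bool) \<Rightarrow> real mat" where
  "adj_mat n E = mat n n (\<lambda>(i,j). if E i j then 1 else 0)"

definition eigenvalues_mset :: "real mat \<Rightarrow> complex multiset" where
  "eigenvalues_mset M = proots (char_poly (map_mat complex_of_real M))"

definition energy :: "real mat \<Rightarrow> real" where
  "energy M = (\<Sum>\<mu>\<in>#eigenvalues_mset M. cmod \<mu>)"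

text \<open>Energy of a graph of order N = dim M with \<sigma> self-loops: sum of |\<mu>_i - \<sigma>/N|.\<close>
definition loop_energy :: "real mat \<Rightarrow> nat \<Rightarrow> real" where
  "loop_energy M \<sigma> = (\<Sum>\<mu>\<in>#eigenvalues_mset M. cmod (\<mu> - of_real (real \<sigma> / real (dim_row M))))"

text \<open>Adjacency matrix of the disjoint union G \<union> G^l (vertices 0..<n form G, n..<2n form G^l,
  which carries a loop at every vertex): A(G) \<oplus> (A(G) + I).\<close>
definition union_loop_adj :: "nat \<Rightarrow> (nat \<Rightarrow> nat \<Rightarrow> bool) \<Rightarrow> real mat" where
  "union_loop_adj n E = four_block_mat (adj_mat n E) (0\<^sub>m n n) (0\<^sub>m n n) (adj_mat n E + 1\<^sub>m n)"

end

theory Submission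
  imports Defs
begin

lemma charpoly_block:
  fixes A B :: "'a::idom mat"
  assumes A: "A \<in> carrier_mat n n" and B: "B \<in> carrier_mat m m"
  shows "char_poly (four_block_mat A (0\<^sub>m n m) (0\<^sub>m m n) B) = char_poly A * char_poly B"
proof -
  have "char_poly_matrix (four_block_mat A (0\<^sub>m n m) (0\<^sub>m m n) B) =
     four_block_mat (char_poly_matrix A) (0\<^sub>m n m) (0\<^sub>m m n) (char_poly_matrix B)"
    by (rule eq_matI) (insert A B, auto simp: char_poly_matrix_def one_poly_def)
  then show ?thesis unfolding char_poly_def
    by (simp add: det_four_block_mat_upper_right_zero[of _ n _ m] A B)
qed

lemma poly_lin_prod: "poly (\<Prod>a\<leftarrow>as. [:-a,1:]) (x::complex) = (\<Prod>a\<leftarrow>as. x - a)"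
  by (induct as) (auto simp: field_simps)

lemma charpoly_shift:
  fixes A :: "complex mat"
  assumes A: "A \<in> carrier_mat n n" and cp: "char_poly A = (\<Prod>a\<leftarrow>as. [:-a,1:])"
  shows "char_poly (A + 1\<^sub>m n) = (\<Prod>a\<leftarrow>as. [:-(a+1),1:])"
proof -
  have "poly (char_poly (A + 1\<^sub>m n)) k = poly (\<Prod>a\<leftarrow>as. [:-(a+1),1:]) k" for k
  proof -
    have "char_matrix (A + 1\<^sub>m n) k = char_matrix A (k-1)"
      by (rule eq_matI) (insert A, auto simp: char_matrix_def)
    then have "poly (char_poly (A + 1\<^sub>m n)) k = poly (char_poly A) (k-1)"
      using char_poly_matrix[of "A+1\<^sub>m n" n k] char_poly_matrix[OF A, of "k-1"] A by simp
    also have "\<dots> = poly (\<Prod>a\<leftarrow>as. [:-(a+1),1:]) k"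
      unfolding cp poly_lin_prod by (induct as) (auto simp: algebra_simps)
    finally show ?thesis .
  qed
  then show ?thesis using poly_eq_poly_eq_iff by blast
qed

lemma real_eig:
  fixes A :: "real mat"
  assumes A: "A \<in> carrier_mat n n" and sym: "\<forall>i<n. \<forall>j<n. A $$ (i,j) = A $$ (j,i)"
    and ev: "eigenvalue (map_mat complex_of_real A) a"
  shows "Im a = 0"
proof -
  obtain v where v: "v \<in> carrier_vec n" "v \<noteq> 0\<^sub>v n"
    "map_mat complex_of_real A *\<^sub>v v = a \<cdot>\<^sub>v v"
    using ev A unfolding eigenvalue_def eigenvector_def by auto
  have row: "(\<Sum>j<n. of_real (A $$ (i,j)) * v$j) = a * v$i" if "i<n" for i
  proof -
    have "(map_mat complex_of_real A *\<^sub>v v) $ i = (a \<cdot>\<^sub>v v) $ i" using v by simp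
    moreover have "(map_mat complex_of_real A *\<^sub>v v) $ i = (\<Sum>j<n. of_real (A $$ (i,j)) * v$j)"
      using that A v(1) by (auto simp: scalar_prod_def lessThan_atLeast0 intro!: sum.cong)
    moreover have "(a \<cdot>\<^sub>v v) $ i = a * v$i" using that v by auto
    ultimately show ?thesis by simp
  qed
  define S where "S = (\<Sum>i<n. cnj (v$i) * (\<Sum>j<n. of_real (A $$ (i,j)) * v$j))"
  define N where "N = (\<Sum>i<n. cnj (v$i) * v$i)"
  have S1: "S = a * N" unfolding S_def N_def using row
    by (simp add: sum_distrib_left algebra_simps)
  have "cnj S = (\<Sum>i<n. \<Sum>j<n. of_real (A $$ (i,j)) * v$i * cnj (v$j))"
    unfolding S_def by (simp add: sum_distrib_left algebra_simps)
  also have "\<dots> = (\<Sum>j<n. \<Sum>i<n. of_real (A $$ (i,j)) * v$i * cnj (v$j))"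
    by (rule sum.swap)
  also have "\<dots> = S" unfolding S_def using sym
    by (auto simp: sum_distrib_left algebra_simps intro!: sum.cong)
  finally have cS: "cnj S = S" .
  have Nr: "N = of_real (\<Sum>i<n. (cmod (v$i))^2)" unfolding N_def
    by (simp add: of_real_sum complex_norm_square[symmetric] mult.commute)
  obtain i where i: "i < n" "v$i \<noteq> 0" using v
    by (metis eq_vecI carrier_vecD index_zero_vec(1,2))
  have "(\<Sum>i<n. (cmod (v$i))^2) > 0"
    by (rule sum_pos2[of _ i]) (use i in auto)
  then have N0: "N \<noteq> 0" "cnj N = N" unfolding Nr by (simp_all only: of_real_eq_0_iff less_irrefl complex_cnj_complex_of_real)
  from cS S1 N0 have "cnj a * N = a * N" by (metis complex_cnj_mult)
  then have "cnj a = a" using N0 by simp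
  then show ?thesis by (metis Reals_cnj_iff complex_is_Real_iff)
qed

lemma proots_lin: "proots (\<Prod>a\<leftarrow>as. [:-a,1:]) = mset (as::complex list)"
proof (induct as)
  case (Cons a as)
  have "(\<Prod>a\<leftarrow>as. [:-a,1:]) \<noteq> 0" by (auto simp: prod_list_zero_iff)
  moreover have "[:-a,1:] \<noteq> 0" by simp
  ultimately have "proots ([:-a,1:] * (\<Prod>a\<leftarrow>as. [:-a,1:])) = proots [:-a,1:] + proots (\<Prod>a\<leftarrow>as. [:-a,1:])"
    by (intro proots_mult) auto
  then show ?case using Cons by (simp del: mult_pCons_left)
qed simp

lemma pointwise:
  assumes "Im a = 0" "cmod a \<ge> 1/2"
  shows "cmod (a - 1/2) + cmod (a + 1 - 1/2) = 2 * cmod a"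
proof -
  obtain r where r: "a = complex_of_real r" using assms(1) by (intro that[of "Re a"]) (simp add: complex_eq_iff)
  have e1: "a - 1/2 = complex_of_real (r - 1/2)" unfolding r by simp
  have e2: "a + 1 - 1/2 = complex_of_real (r + 1/2)" unfolding r by simp
  have "cmod (a - 1/2) = \<bar>r - 1/2\<bar>" unfolding e1 norm_of_real ..
  moreover have "cmod (a + 1 - 1/2) = \<bar>r + 1/2\<bar>" unfolding e2 norm_of_real ..
  moreover have "cmod a = \<bar>r\<bar>" unfolding r by simp
  ultimately show ?thesis using assms(2) by auto
qed

lemma msum: "(\<Sum>x\<in>#mset xs. f x) = (\<Sum>x\<leftarrow>xs. f x)"
  by (induct xs) auto

lemma key:
  assumes "\<forall>a\<in>set as. Im a = 0 \<and> cmod a \<ge> 1/2"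
  shows "(\<Sum>a\<leftarrow>as. cmod (a - 1/2)) + (\<Sum>a\<leftarrow>as. cmod (a + 1 - 1/2)) = 2 * (\<Sum>a\<leftarrow>as. cmod a)"
  using assms
proof (induct as)
  case (Cons a as)
  then show ?case using pointwise[of a] by (simp add: algebra_simps)
qed simp

theorem theorem1:
  fixes n :: nat and E :: "nat \<Rightarrow> nat \<Rightarrow> bool"
  assumes "simple_graph n E"
    and "\<forall>x\<in>#eigenvalues_mset (adj_mat n E). cmod x \<ge> 1/2"
  shows "loop_energy (union_loop_adj n E) n = 2 * energy (adj_mat n E)"
proof -
  define A where "A = adj_mat n E"
  define Ac where "Ac = map_mat complex_of_real A"
  have A: "A \<in> carrier_mat n n" unfolding A_def adj_mat_def by simp
  have Ac: "Ac \<in> carrier_mat n n" unfolding Ac_def using A by simp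
  have Ac1: "Ac + 1\<^sub>m n \<in> carrier_mat n n" using Ac by simp
  have sym: "\<forall>i<n. \<forall>j<n. A $$ (i,j) = A $$ (j,i)"
    using assms(1) unfolding A_def adj_mat_def simple_graph_def by auto
  obtain as where cp: "char_poly Ac = (\<Prod>a\<leftarrow>as. [:- a, 1:])" and len: "length as = n"
    using char_poly_factorized[OF Ac] by blast
  have eA: "eigenvalues_mset A = mset as"
    unfolding eigenvalues_mset_def Ac_def[symmetric] cp proots_lin ..
  have U: "map_mat complex_of_real (union_loop_adj n E) = four_block_mat Ac (0\<^sub>m n n) (0\<^sub>m n n) (Ac + 1\<^sub>m n)"
    unfolding union_loop_adj_def Ac_def A_def
    by (rule eq_matI) (auto simp: adj_mat_def)
  have cpU: "char_poly (map_mat complex_of_real (union_loop_adj n E)) =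
     (\<Prod>a\<leftarrow>as. [:- a, 1:]) * (\<Prod>a\<leftarrow>map (\<lambda>a. a + 1) as. [:- a, 1:])"
    unfolding U charpoly_block[OF Ac Ac1] cp
      charpoly_shift[OF Ac cp] by (simp add: o_def)
  have eU: "eigenvalues_mset (union_loop_adj n E) = mset as + mset (map (\<lambda>a. a + 1) as)"
  proof -
    have nz: "(\<Prod>a\<leftarrow>as. [:- a, 1:]) \<noteq> 0" "(\<Prod>a\<leftarrow>map (\<lambda>a. a + 1) as. [:- a, 1:]) \<noteq> 0"
      by (auto simp: prod_list_zero_iff)
    show ?thesis unfolding eigenvalues_mset_def cpU proots_mult[OF nz] proots_lin ..
  qed
  have dimU: "dim_row (union_loop_adj n E) = 2 * n"
    unfolding union_loop_adj_def adj_mat_def by simp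
  have re: "\<forall>a\<in>set as. Im a = 0 \<and> cmod a \<ge> 1/2"
  proof
    fix a assume a: "a \<in> set as"
    have "poly (char_poly Ac) a = 0" unfolding cp poly_lin_prod using a
      by (simp add: prod_list_zero_iff)
    then have "eigenvalue Ac a" using eigenvalue_root_char_poly[OF Ac] by simp
    then have "Im a = 0" using real_eig[OF A sym] unfolding Ac_def by blast
    moreover have "cmod a \<ge> 1/2" using assms(2) a unfolding A_def[symmetric] eA by simp
    ultimately show "Im a = 0 \<and> cmod a \<ge> 1/2" by simp
  qed
  show ?thesis
  proof (cases "n = 0")
    case True
    then have "as = []" using len by simp
    then show ?thesis unfolding loop_energy_def energy_def eU A_def[symmetric] eA by simp
  next
    case False
    then have c: "complex_of_real (real n / real (dim_row (union_loop_adj n E))) = 1/2"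
      unfolding dimU by simp
    have L: "loop_energy (union_loop_adj n E) n = (\<Sum>a\<leftarrow>as. cmod (a - 1/2)) + (\<Sum>a\<leftarrow>map (\<lambda>a. a+1) as. cmod (a - 1/2))"
      unfolding loop_energy_def eU c image_mset_union sum_mset.union msum ..
    have R: "energy (adj_mat n E) = (\<Sum>a\<leftarrow>as. cmod a)"
      unfolding energy_def A_def[symmetric] eA msum ..
    show ?thesis unfolding L R using key[OF re] by (simp add: o_def)
  qed
qed

end
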